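(* Let $p \geq 5$ be a prime and let $a_1,a_2,a_3 \in \mathbb{F}_p$ with $s := 3+a_1+a_2+a_3 \neq 0$ in $\mathbb{F}_p$. Let $S \subseteq \mathbb{F}_p^3$ be the set of solutions $(x_1,x_2,x_3)$ of \[ x_1^2+x_2^2+x_3^2+a_1x_2x_3+a_2x_1x_3+a_3x_1x_2 = s\,x_1x_2x_3, \] and for $i \in \{1,2,3\}$ (indices taken modulo $3$) let $m_i : S \to S$ be the map replacing $x_i$ by $-x_i + s x_{i-1}x_{i+1} - a_{i+1}x_{i-1} - a_{i-1}x_{i+1}$ and leaving the other two coordinates unchanged. Consider the orbits of the group generated by $m_1,m_2,m_3$ acting on $S$. \begin{enumerate} \item If $a_i^2 \neq 4$ for all $i=1,2,3$, then every orbit other than the orbit $\{(0,0,0)\}$ has size divisible by $p$. \item If there is an index $i$ with $a_i^2 = 4$ and $2a_{i-1} = a_{i+1}a_i$ (indices modulo $3$), then every orbit other than $\{(0,0,0)\}$ has size divisible by $p$. \end{enumerate}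
   Context: Each $m_i$ is an involution of $S$ (it exchanges the two roots of the defining equation viewed as a quadratic in $x_i$). The point $(0,0,0)$ always lies in $S$ and is fixed by all moves. *)

theory Defs
  imports "HOL-Computational_Algebra.Primes"
begin

text \<open>The field F_p is modelled as an arbitrary finite field type 'a with exactly p elements
  (p prime), which is isomorphic to F_p. Points of F_p^3 are triples.\<close>

definition sval :: "'a::field \<Rightarrow> 'a \<Rightarrow> 'a \<Rightarrow> 'a" where
  "sval a1 a2 a3 = 3 + a1 + a2 + a3"

definition surf :: "'a::field \<Rightarrow> 'a \<Rightarrow> 'a \<Rightarrow> ('a \<times> 'a \<times> 'a) set" where
  "surf a1 a2 a3 = {(x1, x2, x3).
     x1^2 + x2^2 + x3^2 + a1*x2*x3 + a2*x1*x3 + a3*x1*x2 = sval a1 a2 a3 * x1*x2*x3}"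

definition move :: "'a::field \<Rightarrow> 'a \<Rightarrow> 'a \<Rightarrow> nat \<Rightarrow> 'a \<times> 'a \<times> 'a \<Rightarrow> 'a \<times> 'a \<times> 'a" where
  "move a1 a2 a3 i = (\<lambda>(x1, x2, x3). let s = sval a1 a2 a3 in
     if i = 1 then (- x1 + s*x3*x2 - a2*x3 - a3*x2, x2, x3)
     else if i = 2 then (x1, - x2 + s*x1*x3 - a3*x1 - a1*x3, x3)
     else (x1, x2, - x3 + s*x2*x1 - a1*x2 - a2*x1))"

text \<open>Orbit of P under the group generated by m_1, m_2, m_3. Since each m_i is an involution,
  every group element is a finite composition of the m_i.\<close>
definition orbit :: "'a::field \<Rightarrow> 'a \<Rightarrow> 'a \<Rightarrow> 'a \<times> 'a \<times> 'a \<Rightarrow> ('a \<times> 'a \<times> 'a) set" where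
  "orbit a1 a2 a3 P = {foldr (move a1 a2 a3) w P | w. set w \<subseteq> {1, 2, 3}}"

end

theory Submission imports Defs "HOL-Number_Theory.Residues" begin

lemma keyA:
  fixes x y z s a1 a2 a3 :: "'a::field"
  assumes eq: "x^2+y^2+z^2+a1*y*z+a2*x*z+a3*x*y = s*x*y*z"
    and nz: "s \<noteq> 0" "x \<noteq> 0" "y \<noteq> 0" "z \<noteq> 0"
  shows "(s * z * y - x - a2 * z - a3 * y) / (s * y * z) - x / (s * y * z) +
        ((s * x * z - y - a3 * x - a1 * z) / (s * x * z) - y / (s * x * z) +
         ((s * y * x - z - a1 * y - a2 * x) / (s * x * y) - z / (s * x * y))) = 1"
proof -
  have "(s * z * y - x - a2 * z - a3 * y) / (s * y * z) - x / (s * y * z) +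
        ((s * x * z - y - a3 * x - a1 * z) / (s * x * z) - y / (s * x * z) +
         ((s * y * x - z - a1 * y - a2 * x) / (s * x * y) - z / (s * x * y)))
      = (3*s*x*y*z - 2*(x^2+y^2+z^2+a1*y*z+a2*x*z+a3*x*y)) / (s*x*y*z)"
    using nz by (simp add: field_simps power2_eq_square)
  also have "\<dots> = 1" using eq nz by simp
  finally show ?thesis .
qed

lemma keyB1:
  fixes u v k c :: "'a::field"
  assumes eq: "u^2 + v^2 + k*u*v = 0" and nz: "u \<noteq> 0" "v \<noteq> 0"
  shows "c/u - c/(-u - k*v) = c*(2/u + k/v)"
proof -
  have u': "(-u - k*v) * u = v^2"
  proof -
    have "(-u - k*v)*u - v^2 = -(u^2+v^2+k*u*v)" by (simp add: algebra_simps power2_eq_square)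
    then show ?thesis using eq by simp
  qed
  have nu: "-u - k*v \<noteq> 0" using u' nz by auto
  have "c/u - c/(-u - k*v) = c*(1/u - 1/(-u - k*v))" by (simp add: algebra_simps)
  also have "1/(-u - k*v) = u/v^2" using u' nu nz by (simp add: field_simps)
  also have "1/u - u/v^2 = 2/u + k/v"
  proof -
    have "1/u - u/v^2 - (2/u + k/v) = - (u^2 + v^2 + k*u*v)/(u*v^2)"
      using nz by (simp add: field_simps power2_eq_square) (simp add: algebra_simps)?
    then show ?thesis using eq by simp
  qed
  finally show ?thesis .
qed

lemma keyB:
  fixes u v k s c d al be :: "'a::field"
  assumes eq: "u^2 + v^2 + k*u*v = 0"
    and nz: "s \<noteq> 0" "u \<noteq> 0" "v \<noteq> 0"
    and h1: "2*c + k*d = al/s" and h2: "k*c + 2*d = be/s"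
  shows "(s*v*u - al*v - be*u)/(s*u*v) + (c/u - c/(-u - k*v)) + (d/v - d/(-v-k*u)) = 1"
proof -
  have eq2: "v^2 + u^2 + k*v*u = 0" using eq by (simp add: algebra_simps)
  have "(s*v*u - al*v - be*u)/(s*u*v) + (c/u - c/(-u - k*v)) + (d/v - d/(-v-k*u))
     = (s*v*u - al*v - be*u)/(s*u*v) + c*(2/u + k/v) + d*(2/v + k/u)"
    using keyB1[OF eq nz(2,3)] keyB1[OF eq2 nz(3,2)] by simp
  also have "\<dots> = 1 - (al/s)/u - (be/s)/v + (2*c + k*d)/u + (k*c+2*d)/v"
    using nz by (simp add: field_simps)
  also have "\<dots> = 1" using h1 h2 by simp
  finally show ?thesis .
qed

lemma move_invol: "move a1 a2 a3 i (move a1 a2 a3 i P) = P"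
  by (cases P) (auto simp: move_def Let_def)

lemma move_zero: "move a1 a2 a3 i (0,0,0) = (0,0,0)"
  by (auto simp: move_def Let_def)

lemma move_surf:
  assumes "P \<in> surf a1 a2 a3" shows "move a1 a2 a3 i P \<in> surf a1 a2 a3"
proof -
  obtain x y z where P: "P = (x,y,z)" by (cases P)
  define s where "s = sval a1 a2 a3"
  have eq: "x^2 + y^2 + z^2 + a1*y*z + a2*x*z + a3*x*y = s*x*y*z"
    using assms by (simp add: P surf_def s_def)
  let ?E = "\<lambda>x y z. x^2 + y^2 + z^2 + a1*y*z + a2*x*z + a3*x*y - s*x*y*z"
  have E0: "?E x y z = 0" using eq by simp
  have "?E (- x + s*z*y - a2*z - a3*y) y z = ?E x y z"
       "?E x (- y + s*x*z - a3*x - a1*z) z = ?E x y z"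
       "?E x y (- z + s*y*x - a1*y - a2*x) = ?E x y z"
    by (simp_all add: algebra_simps power2_eq_square)
  then show ?thesis
    using E0 unfolding P move_def surf_def Let_def s_def[symmetric]
    by auto
qed

lemma orbit_closed:
  assumes "Q \<in> orbit a1 a2 a3 P" "i \<in> {1,2,3}"
  shows "move a1 a2 a3 i Q \<in> orbit a1 a2 a3 P"
proof -
  obtain w where w: "Q = foldr (move a1 a2 a3) w P" "set w \<subseteq> {1,2,3}"
    using assms(1) by (auto simp: orbit_def)
  then show ?thesis using assms(2) unfolding orbit_def
    by (intro CollectI exI[of _ "i # w"]) auto
qed

lemma foldr_surf: "P \<in> surf a1 a2 a3 \<Longrightarrow> foldr (move a1 a2 a3) w P \<in> surf a1 a2 a3"
  by (induction w) (auto intro: move_surf)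

lemma foldr_zero: "foldr (move a1 a2 a3) w P = (0,0,0) \<Longrightarrow> P = (0,0,0)"
proof (induction w)
  case Nil then show ?case by simp
next
  case (Cons i w)
  have "foldr (move a1 a2 a3) w P = move a1 a2 a3 i (move a1 a2 a3 i (foldr (move a1 a2 a3) w P))"
    by (simp add: move_invol)
  also have "\<dots> = (0,0,0)" using Cons.prems by (simp add: move_zero)
  finally show ?case using Cons.IH by blast
qed

lemma orbit_self: "P \<in> orbit a1 a2 a3 P"
  unfolding orbit_def by (intro CollectI exI[of _ "[]"]) auto

lemma sum_move:
  assumes "finite A" "\<And>Q. Q \<in> A \<Longrightarrow> move a1 a2 a3 i Q \<in> A"
  shows "(\<Sum>Q\<in>A. H (move a1 a2 a3 i Q)) = (\<Sum>Q\<in>A. H Q)"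
proof -
  have "bij_betw (move a1 a2 a3 i) A A"
  proof (rule bij_betw_imageI)
    show "inj_on (move a1 a2 a3 i) A" by (metis inj_onI move_invol)
    show "move a1 a2 a3 i ` A = A"
      using assms(2) by (auto simp: image_iff) (metis move_invol)
  qed
  then show ?thesis by (rule sum.reindex_bij_betw)
qed

definition HH :: "'a::field \<Rightarrow> 'a \<Rightarrow> 'a \<Rightarrow> 'a \<Rightarrow> 'a \<Rightarrow> 'a \<Rightarrow> 'a \<Rightarrow> 'a \<Rightarrow> 'a \<Rightarrow> nat \<Rightarrow> 'a \<times> 'a \<times> 'a \<Rightarrow> 'a" where
  "HH a1 a2 a3 c1 d1 c2 d2 c3 d3 i = (\<lambda>(x,y,z). let s = sval a1 a2 a3 in
     if i = 1 then -x/(s*y*z) + (if y = 0 then c2/x else 0) + (if z = 0 then c3/x else 0)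
     else if i = 2 then -y/(s*x*z) + (if x = 0 then c1/y else 0) + (if z = 0 then d3/y else 0)
     else -z/(s*x*y) + (if x = 0 then d1/z else 0) + (if y = 0 then d2/z else 0))"

lemma key:
  fixes a1 a2 a3 :: "'a::field"
  defines "s \<equiv> sval a1 a2 a3"
  assumes sn: "s \<noteq> 0"
    and k1: "2*c1 + a1*d1 = a2/s" "a1*c1 + 2*d1 = a3/s"
    and k2: "2*c2 + a2*d2 = a1/s" "a2*c2 + 2*d2 = a3/s"
    and k3: "2*c3 + a3*d3 = a1/s" "a3*c3 + 2*d3 = a2/s"
    and PS: "P \<in> surf a1 a2 a3" and P0: "P \<noteq> (0,0,0)"
  shows "(\<Sum>i\<in>{1,2,3::nat}. HH a1 a2 a3 c1 d1 c2 d2 c3 d3 i P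
            - HH a1 a2 a3 c1 d1 c2 d2 c3 d3 i (move a1 a2 a3 i P)) = 1"
proof -
  obtain x y z where P: "P = (x,y,z)" by (cases P)
  have eq: "x^2 + y^2 + z^2 + a1*y*z + a2*x*z + a3*x*y = s*x*y*z"
    using PS by (simp add: P surf_def s_def)
  have L: "(\<Sum>i\<in>{1,2,3::nat}. HH a1 a2 a3 c1 d1 c2 d2 c3 d3 i P
            - HH a1 a2 a3 c1 d1 c2 d2 c3 d3 i (move a1 a2 a3 i P)) =
     (HH a1 a2 a3 c1 d1 c2 d2 c3 d3 1 P - HH a1 a2 a3 c1 d1 c2 d2 c3 d3 1 (move a1 a2 a3 1 P))
   + (HH a1 a2 a3 c1 d1 c2 d2 c3 d3 2 P - HH a1 a2 a3 c1 d1 c2 d2 c3 d3 2 (move a1 a2 a3 2 P))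
   + (HH a1 a2 a3 c1 d1 c2 d2 c3 d3 3 P - HH a1 a2 a3 c1 d1 c2 d2 c3 d3 3 (move a1 a2 a3 3 P))"
    by (simp add: algebra_simps)
  consider "x \<noteq> 0" "y \<noteq> 0" "z \<noteq> 0" | "x = 0" "y \<noteq> 0" "z \<noteq> 0"
    | "y = 0" "x \<noteq> 0" "z \<noteq> 0" | "z = 0" "x \<noteq> 0" "y \<noteq> 0"
  proof -
    have "\<not> (x = 0 \<and> y = 0)" "\<not> (x = 0 \<and> z = 0)" "\<not> (y = 0 \<and> z = 0)"
      using eq P0 P by auto
    then show ?thesis using that by blast
  qed
  then show ?thesis
  proof cases
    case 1
    show ?thesis unfolding L P
      using keyA[OF eq sn 1] 1 sn
      by (simp add: HH_def move_def Let_def s_def[symmetric])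
  next
    case 2
    have e: "y^2 + z^2 + a1*y*z = 0" using eq 2 by simp
    have "-y - a1*z \<noteq> 0" "-z - a1*y \<noteq> 0"
    proof -
      have "(-y - a1*z) * y - z^2 = -(y^2 + z^2 + a1*y*z)" "(-z - a1*y)*z - y^2 = -(y^2 + z^2 + a1*y*z)"
        by (simp_all add: algebra_simps power2_eq_square)
      then have "(-y - a1*z) * y = z^2" "(-z - a1*y)*z = y^2" using e by simp_all
      then show "-y - a1*z \<noteq> 0" "-z - a1*y \<noteq> 0" using 2 by auto
    qed
    then show ?thesis unfolding L P
      using keyB[OF e sn 2(2,3) k1] 2 sn
      by (simp add: HH_def move_def Let_def s_def[symmetric] algebra_simps)
  next
    case 3
    have e: "x^2 + z^2 + a2*x*z = 0" using eq 3 by simp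
    have "-x - a2*z \<noteq> 0" "-z - a2*x \<noteq> 0"
    proof -
      have "(-x - a2*z) * x - z^2 = -(x^2 + z^2 + a2*x*z)" "(-z - a2*x)*z - x^2 = -(x^2 + z^2 + a2*x*z)"
        by (simp_all add: algebra_simps power2_eq_square)
      then have "(-x - a2*z) * x = z^2" "(-z - a2*x)*z = x^2" using e by simp_all
      then show "-x - a2*z \<noteq> 0" "-z - a2*x \<noteq> 0" using 3 by auto
    qed
    then show ?thesis unfolding L P
      using keyB[OF e sn 3(2,3) k2] 3 sn
      by (simp add: HH_def move_def Let_def s_def[symmetric] algebra_simps)
  next
    case 4
    have e: "x^2 + y^2 + a3*x*y = 0" using eq 4 by simp
    have "-x - a3*y \<noteq> 0" "-y - a3*x \<noteq> 0"
    proof -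
      have "(-x - a3*y) * x - y^2 = -(x^2 + y^2 + a3*x*y)" "(-y - a3*x)*y - x^2 = -(x^2 + y^2 + a3*x*y)"
        by (simp_all add: algebra_simps power2_eq_square)
      then have "(-x - a3*y) * x = y^2" "(-y - a3*x)*y = x^2" using e by simp_all
      then show "-x - a3*y \<noteq> 0" "-y - a3*x \<noteq> 0" using 4 by auto
    qed
    then show ?thesis unfolding L P
      using keyB[OF e sn 4(2,3) k3] 4 sn
      by (simp add: HH_def move_def Let_def s_def[symmetric] algebra_simps)
  qed
qed


lemma foldr_at_zero: "foldr (move a1 a2 a3) w (0,0,0) = (0,0,0)"
  by (induction w) (auto simp: move_zero)

lemma char_p:
  fixes p :: nat
  assumes "prime p" "card (UNIV :: 'a::{finite,field} set) = p"
  shows "CHAR('a) = p"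
proof -
  have "CHAR('a) > 0" by (rule finite_imp_CHAR_pos) simp
  then have "prime CHAR('a)" by (rule prime_CHAR_semidom)
  moreover have "CHAR('a) dvd p" using CHAR_dvd_CARD[where 'a='a] assms(2) by simp
  ultimately show ?thesis using assms(1) primes_dvd_imp_eq by blast
qed

lemma solv:
  fixes k A B :: "'a::field"
  assumes two: "(2::'a) \<noteq> 0" and h: "k^2 \<noteq> 4 \<or> k*A = 2*B"
  shows "\<exists>c d. 2*c + k*d = A \<and> k*c + 2*d = B"
proof (cases "k^2 = 4")
  case True
  then have "k*A = 2*B" using h by simp
  then show ?thesis using two
    by (intro exI[of _ "A/2"] exI[of _ 0]) (simp add: field_simps)
next
  case False
  then have D: "4 - k^2 \<noteq> 0" by simp
  define t where "t = 4 - k^2"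
  have tn: "t \<noteq> 0" using D t_def by simp
  show ?thesis
  proof (intro exI conjI)
    have "2 * ((2*A - k*B)/t) + k * ((2*B - k*A)/t) = (2 * (2*A - k*B) + k * (2*B - k*A))/t"
      by (simp add: add_divide_distrib)
    also have "2 * (2*A - k*B) + k * (2*B - k*A) = t * A"
      by (simp add: t_def algebra_simps power2_eq_square)
    finally show "2 * ((2*A - k*B)/t) + k * ((2*B - k*A)/t) = A" using tn by simp
    have "k * ((2*A - k*B)/t) + 2 * ((2*B - k*A)/t) = (k * (2*A - k*B) + 2 * (2*B - k*A))/t"
      by (simp add: add_divide_distrib)
    also have "k * (2*A - k*B) + 2 * (2*B - k*A) = t * B"
      by (simp add: t_def algebra_simps power2_eq_square)
    finally show "k * ((2*A - k*B)/t) + 2 * ((2*B - k*A)/t) = B" using tn by simp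
  qed
qed

lemma main_div:
  fixes a1 a2 a3 :: "'a::{finite,field}" and p :: nat
  assumes pp: "prime p" and card: "card (UNIV :: 'a set) = p"
    and sn: "sval a1 a2 a3 \<noteq> 0"
    and k1: "2*c1 + a1*d1 = a2/sval a1 a2 a3" "a1*c1 + 2*d1 = a3/sval a1 a2 a3"
    and k2: "2*c2 + a2*d2 = a1/sval a1 a2 a3" "a2*c2 + 2*d2 = a3/sval a1 a2 a3"
    and k3: "2*c3 + a3*d3 = a1/sval a1 a2 a3" "a3*c3 + 2*d3 = a2/sval a1 a2 a3"
    and PS: "P \<in> surf a1 a2 a3" and ne: "orbit a1 a2 a3 P \<noteq> {(0,0,0)}"
  shows "p dvd card (orbit a1 a2 a3 P)"
proof -
  define A where "A = orbit a1 a2 a3 P"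
  define H where "H = HH a1 a2 a3 c1 d1 c2 d2 c3 d3"
  have fin: "finite A" by simp
  have P0: "P \<noteq> (0,0,0)"
  proof
    assume "P = (0,0,0)"
    have "A \<subseteq> {(0,0,0)}"
    proof
      fix Q assume "Q \<in> A"
      then obtain w where "Q = foldr (move a1 a2 a3) w P" unfolding A_def orbit_def by blast
      then show "Q \<in> {(0,0,0)}" using \<open>P = (0,0,0)\<close> foldr_at_zero by simp
    qed
    moreover have "P \<in> A" unfolding A_def by (rule orbit_self)
    ultimately have "A = {(0,0,0)}" using \<open>P = (0,0,0)\<close> by auto
    then show False using ne A_def by simp
  qed
  have inA: "Q \<in> surf a1 a2 a3 \<and> Q \<noteq> (0,0,0)" if QA: "Q \<in> A" for Q
  proof -
    obtain w where w: "Q = foldr (move a1 a2 a3) w P" using QA unfolding A_def orbit_def by blast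
    have "Q \<in> surf a1 a2 a3" unfolding w using PS by (rule foldr_surf)
    moreover have "Q \<noteq> (0,0,0)" using foldr_zero[of a1 a2 a3 w P] P0 w by metis
    ultimately show ?thesis by blast
  qed
  have cl: "\<And>Q. Q \<in> A \<Longrightarrow> move a1 a2 a3 i Q \<in> A" if "i \<in> {1,2,3}" for i
    using orbit_closed[OF _ that] unfolding A_def by blast
  have "(of_nat (card A) :: 'a) = (\<Sum>Q\<in>A. 1)" by simp
  also have "\<dots> = (\<Sum>Q\<in>A. \<Sum>i\<in>{1,2,3::nat}. H i Q - H i (move a1 a2 a3 i Q))"
    using key[OF sn k1 k2 k3] inA unfolding H_def by (intro sum.cong) auto
  also have "\<dots> = (\<Sum>i\<in>{1,2,3::nat}. \<Sum>Q\<in>A. H i Q - H i (move a1 a2 a3 i Q))"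
    by (rule sum.swap)
  also have "\<dots> = (\<Sum>i\<in>{1,2,3::nat}. 0)"
  proof (intro sum.cong refl)
    fix i :: nat assume "i \<in> {1,2,3}"
    then show "(\<Sum>Q\<in>A. H i Q - H i (move a1 a2 a3 i Q)) = 0"
      using sum_move[OF fin cl, of i "H i"] by (simp add: sum_subtractf)
  qed
  finally have "(of_nat (card A) :: 'a) = 0" by simp
  then have "CHAR('a) dvd card A" by (simp add: of_nat_eq_0_iff_char_dvd)
  then show ?thesis using char_p[OF pp card] A_def by simp
qed

lemma sym4:
  fixes a b c :: "'a::field"
  assumes "a^2 = 4" "2*b = c*a" "(2::'a) \<noteq> 0"
  shows "a*b = 2*c"
proof -
  have "2*(a*b) = a*(2*b)" by simp
  also have "\<dots> = c*a^2" using assms(2) by (simp add: power2_eq_square algebra_simps)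
  also have "\<dots> = 2*(2*c)" using assms(1) by simp
  finally have h: "2*(a*b) = 2*(2*c)" .
  show ?thesis using h by (rule mult_left_cancel[OF assms(3), THEN iffD1])
qed

theorem theorem1p1:
  fixes a1 a2 a3 :: "'a::{finite, field}" and p :: nat
  assumes "prime p" and "p \<ge> 5" and "card (UNIV :: 'a set) = p"
    and "sval a1 a2 a3 \<noteq> 0"
  shows "(a1^2 \<noteq> 4 \<and> a2^2 \<noteq> 4 \<and> a3^2 \<noteq> 4 \<longrightarrow>
           (\<forall>P \<in> surf a1 a2 a3. orbit a1 a2 a3 P \<noteq> {(0, 0, 0)} \<longrightarrow>
              p dvd card (orbit a1 a2 a3 P)))
       \<and> ((a1^2 = 4 \<and> 2*a3 = a2*a1 \<or> a2^2 = 4 \<and> 2*a1 = a3*a2 \<or> a3^2 = 4 \<and> 2*a2 = a1*a3) \<longrightarrow>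
           (\<forall>P \<in> surf a1 a2 a3. orbit a1 a2 a3 P \<noteq> {(0, 0, 0)} \<longrightarrow>
              p dvd card (orbit a1 a2 a3 P)))"
proof -
  define s where "s = sval a1 a2 a3"
  have sn: "s \<noteq> 0" using assms(4) s_def by simp
  have two: "(2::'a) \<noteq> 0"
  proof
    assume "(2::'a) = 0"
    then have "(of_nat 2 :: 'a) = 0" by simp
    then have "CHAR('a) dvd 2" by (simp only: of_nat_eq_0_iff_char_dvd)
    then have "p dvd 2" using char_p[OF assms(1,3)] by simp
    then show False using assms(2) by (auto dest: dvd_imp_le)
  qed
  have gen: "p dvd card (orbit a1 a2 a3 P)"
    if c1: "a1^2 \<noteq> 4 \<or> a1*a2 = 2*a3" and c2: "a2^2 \<noteq> 4 \<or> a2*a1 = 2*a3"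
      and c3: "a3^2 \<noteq> 4 \<or> a3*a1 = 2*a2"
      and PS: "P \<in> surf a1 a2 a3" and ne: "orbit a1 a2 a3 P \<noteq> {(0,0,0)}" for P
  proof -
    have e: "k*(A/s) = 2*(B/s)" if "k*A = 2*B" for k A B
      using that by (metis times_divide_eq_right)
    obtain x1 y1 where k1: "2*x1 + a1*y1 = a2/s" "a1*x1 + 2*y1 = a3/s"
      using solv[OF two, of a1 "a2/s" "a3/s"] c1 e by blast
    obtain x2 y2 where k2: "2*x2 + a2*y2 = a1/s" "a2*x2 + 2*y2 = a3/s"
      using solv[OF two, of a2 "a1/s" "a3/s"] c2 e by blast
    obtain x3 y3 where k3: "2*x3 + a3*y3 = a1/s" "a3*x3 + 2*y3 = a2/s"
      using solv[OF two, of a3 "a1/s" "a2/s"] c3 e by blast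
    show ?thesis
      using main_div[OF assms(1,3,4), of x1 y1 x2 y2 x3 y3 P] k1 k2 k3 PS ne s_def by simp
  qed
  have part2: "a1^2 \<noteq> 4 \<or> a1*a2 = 2*a3" "a2^2 \<noteq> 4 \<or> a2*a1 = 2*a3" "a3^2 \<noteq> 4 \<or> a3*a1 = 2*a2"
    if h: "a1^2 = 4 \<and> 2*a3 = a2*a1 \<or> a2^2 = 4 \<and> 2*a1 = a3*a2 \<or> a3^2 = 4 \<and> 2*a2 = a1*a3"
  proof -
    have "(a1*a2 = 2*a3 \<and> a3*a1 = 2*a2) \<or> (a2^2 = 4 \<and> a2*a1 = 2*a3 \<and> a2*a3 = 2*a1)
        \<or> (a3^2 = 4 \<and> a3*a1 = 2*a2 \<and> a3*a2 = 2*a1)"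
    proof -
      { assume h1: "a1^2 = 4" "2*a3 = a2*a1"
        have "a1*a2 = 2*a3" using h1 by (simp add: mult.commute)
        moreover have "a1*a3 = 2*a2" using sym4[OF h1 two] .
        ultimately have ?thesis by (simp add: mult.commute) }
      moreover
      { assume h2: "a2^2 = 4" "2*a1 = a3*a2"
        have "a2*a1 = 2*a3" using sym4[OF h2 two] .
        then have ?thesis using h2 by (simp add: mult.commute) }
      moreover
      { assume h3: "a3^2 = 4" "2*a2 = a1*a3"
        have "a3*a2 = 2*a1" using sym4[OF h3 two] .
        then have ?thesis using h3 by (simp add: mult.commute) }
      ultimately show ?thesis using h by blast
    qed
    note D = this
    show "a1^2 \<noteq> 4 \<or> a1*a2 = 2*a3"
      using D
    proof (elim disjE conjE)
      assume "a3^2 = 4" "a3*a1 = 2*a2" "a3*a2 = 2*a1"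
      show ?thesis
      proof (cases "a1^2 = 4")
        case True
        have "2*a2 = a3*a1" using \<open>a3*a1 = 2*a2\<close> by simp
        from sym4[OF True this two] show ?thesis by simp
      qed simp
    qed (simp_all add: mult.commute)
    show "a2^2 \<noteq> 4 \<or> a2*a1 = 2*a3"
      using D
    proof (elim disjE conjE)
      assume "a3^2 = 4" "a3*a1 = 2*a2" "a3*a2 = 2*a1"
      show ?thesis
      proof (cases "a2^2 = 4")
        case True
        have "2*a1 = a3*a2" using \<open>a3*a2 = 2*a1\<close> by simp
        from sym4[OF True this two] show ?thesis by simp
      qed simp
    qed (simp_all add: mult.commute)
    show "a3^2 \<noteq> 4 \<or> a3*a1 = 2*a2"
      using D
    proof (elim disjE conjE)
      assume "a2^2 = 4" "a2*a1 = 2*a3" "a2*a3 = 2*a1"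
      show ?thesis
      proof (cases "a3^2 = 4")
        case True
        have "2*a1 = a2*a3" using \<open>a2*a3 = 2*a1\<close> by simp
        from sym4[OF True this two] show ?thesis by simp
      qed simp
    qed (simp_all add: mult.commute)
  qed
  show ?thesis
  proof (intro conjI impI ballI)
    fix P assume "a1^2 \<noteq> 4 \<and> a2^2 \<noteq> 4 \<and> a3^2 \<noteq> 4" "P \<in> surf a1 a2 a3"
      "orbit a1 a2 a3 P \<noteq> {(0,0,0)}"
    then show "p dvd card (orbit a1 a2 a3 P)" by (intro gen) auto
  next
    fix P assume h: "a1^2 = 4 \<and> 2*a3 = a2*a1 \<or> a2^2 = 4 \<and> 2*a1 = a3*a2 \<or> a3^2 = 4 \<and> 2*a2 = a1*a3"
      and "P \<in> surf a1 a2 a3" "orbit a1 a2 a3 P \<noteq> {(0,0,0)}"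
    then show "p dvd card (orbit a1 a2 a3 P)" using part2[OF h] by (intro gen) auto
  qed
qed

end
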